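(* Let $n\geq1$, $q\geq2$ and $k\geq0$ be integers. (1) For every $j\in\{0,1,\dots,n\}$, $E_{\nu_n^{*k}}(\phi_j)=\left(1-\frac{jq}{n(q-1)}\right)^k$. (2) If moreover $(n-2)(q-1)\geq 2$, then $\mathrm{Var}_{\nu_n^{*k}}(\phi_1)\leq\frac1n$.
   Context: $X_n=\{0,\dots,q-1\}^n$, $x^{(0)}=(0,\dots,0)$, $d(x,y)=\#\{i:x_i\neq y_i\}$. The simple random walk on $X_n$ has transition probability $p_n(x,x')=\frac{1}{n(q-1)}$ if $d(x,x')=1$ and $0$ otherwise; $p_n^{(k)}$ is the $k$-step transition probability ($p_n^{(0)}(x,x')=\delta_{x,x'}$) and $\nu_n^{*k}(x)=p_n^{(k)}(x^{(0)},x)$. For $j\in\{0,\dots,n\}$, $\phi_j(x)=\sum_{r=0}^{j}\frac{(-j)_r(-l)_r}{(-n)_r\,r!}\left(\frac{q}{q-1}\right)^r$ with $l=d(x^{(0)},x)$ and $(\alpha)_r=\alpha(\alpha+1)\cdots(\alpha+r-1)$, $(\alpha)_0=1$. For a probability measure $\mu$ and function $f$ on $X_n$, $E_\mu(f)=\sum_x f(x)\mu(x)$ and $\mathrm{Var}_\mu(f)=E_\mu(f^2)-E_\mu(f)^2$. *)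

theory Defs
  imports "HOL-Analysis.Analysis"
begin

text \<open>The space X_n = {0,...,q-1}^n, represented as functions nat \<Rightarrow> nat that are
  below q on {0..<n} and equal to 0 outside {0..<n}.\<close>
definition Xn :: "nat \<Rightarrow> nat \<Rightarrow> (nat \<Rightarrow> nat) set" where
  "Xn q n = {x. (\<forall>i<n. x i < q) \<and> (\<forall>i\<ge>n. x i = 0)}"

definition x0 :: "nat \<Rightarrow> nat" where
  "x0 = (\<lambda>i. 0)"

definition hdist :: "nat \<Rightarrow> (nat \<Rightarrow> nat) \<Rightarrow> (nat \<Rightarrow> nat) \<Rightarrow> nat" where
  "hdist n x y = card {i \<in> {0..<n}. x i \<noteq> y i}"

definition trans_p :: "nat \<Rightarrow> nat \<Rightarrow> (nat \<Rightarrow> nat) \<Rightarrow> (nat \<Rightarrow> nat) \<Rightarrow> real" where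
  "trans_p q n x x' = (if hdist n x x' = 1 then 1 / (real n * (real q - 1)) else 0)"

fun trans_pk :: "nat \<Rightarrow> nat \<Rightarrow> nat \<Rightarrow> (nat \<Rightarrow> nat) \<Rightarrow> (nat \<Rightarrow> nat) \<Rightarrow> real" where
  "trans_pk q n 0 x x' = (if x = x' then 1 else 0)"
| "trans_pk q n (Suc k) x x' = (\<Sum>y\<in>Xn q n. trans_pk q n k x y * trans_p q n y x')"

definition nu_conv :: "nat \<Rightarrow> nat \<Rightarrow> nat \<Rightarrow> (nat \<Rightarrow> nat) \<Rightarrow> real" where
  "nu_conv q n k x = trans_pk q n k x0 x"

definition phi :: "nat \<Rightarrow> nat \<Rightarrow> nat \<Rightarrow> (nat \<Rightarrow> nat) \<Rightarrow> real" where
  "phi q n j x = (let l = hdist n x0 x in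
     \<Sum>r=0..j. pochhammer (- real j) r * pochhammer (- real l) r
               / (pochhammer (- real n) r * fact r) * (real q / (real q - 1)) ^ r)"

definition Exp :: "nat \<Rightarrow> nat \<Rightarrow> ((nat \<Rightarrow> nat) \<Rightarrow> real) \<Rightarrow> ((nat \<Rightarrow> nat) \<Rightarrow> real) \<Rightarrow> real" where
  "Exp q n \<mu> f = (\<Sum>x\<in>Xn q n. f x * \<mu> x)"

definition Var :: "nat \<Rightarrow> nat \<Rightarrow> ((nat \<Rightarrow> nat) \<Rightarrow> real) \<Rightarrow> ((nat \<Rightarrow> nat) \<Rightarrow> real) \<Rightarrow> real" where
  "Var q n \<mu> f = Exp q n \<mu> (\<lambda>x. (f x)^2) - (Exp q n \<mu> f)^2"

end

theory Submission
  imports Defs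
begin


lemma finite_Xn: "finite (Xn q n)"
proof -
  let ?f = "\<lambda>x::nat\<Rightarrow>nat. map x [0..<n]"
  have "?f ` Xn q n \<subseteq> {xs. set xs \<subseteq> {..<q} \<and> length xs = n}"
    by (force simp: Xn_def)
  hence fin: "finite (?f ` Xn q n)"
    by (rule finite_subset) (rule finite_lists_length_eq, simp)
  have "inj_on ?f (Xn q n)"
  proof (rule inj_onI)
    fix x y assume "x \<in> Xn q n" "y \<in> Xn q n" "?f x = ?f y"
    then show "x = y"
      by (auto simp: Xn_def fun_eq_iff)
  qed
  thus ?thesis using fin finite_image_iff by blast
qed

lemma x0_in: "q \<ge> 1 \<Longrightarrow> x0 \<in> Xn q n" by (simp add: Xn_def x0_def)

definition AA :: "nat \<Rightarrow> real \<Rightarrow> real" where "AA r x = pochhammer (-x) r"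

lemma F1: "x * AA r (x-1) = - AA (Suc r) x"
  by (simp add: AA_def pochhammer_rec algebra_simps)
lemma F2: "x * AA r x = real r * AA r x - AA (Suc r) x"
  by (simp add: AA_def pochhammer_Suc algebra_simps)
lemma F3: "AA (Suc s) (x+1) = AA (Suc s) x - real (Suc s) * AA s x"
proof -
  have "AA (Suc s) (x+1) = (-x-1) * pochhammer (-x-1+1) s"
    unfolding AA_def by (subst pochhammer_rec) simp
  also have "-x-1+1 = -x" by simp
  finally show ?thesis by (simp add: AA_def pochhammer_Suc algebra_simps)
qed


definition cc :: "nat \<Rightarrow> nat \<Rightarrow> nat \<Rightarrow> nat \<Rightarrow> real" where
  "cc q n j r = pochhammer (- real j) r / (pochhammer (- real n) r * fact r) * (real q / (real q - 1)) ^ r"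

definition KK :: "nat \<Rightarrow> nat \<Rightarrow> nat \<Rightarrow> real \<Rightarrow> real" where
  "KK q n j x = (\<Sum>r=0..j. cc q n j r * AA r x)"

lemma phi_KK: "phi q n j y = KK q n j (real (hdist n x0 y))"
  unfolding phi_def KK_def cc_def AA_def Let_def
  by (rule sum.cong) (auto simp: mult_ac)

lemma cc0: "cc q n j 0 = 1" by (simp add: cc_def)

lemma cc_rel:
  assumes "s < j" "j \<le> n" "q \<ge> 2"
  shows "cc q n j (Suc s) * (real q - 1) * (real s + 1) * (real s - real n)
         = - cc q n j s * real q * (real j - real s)"
proof -
  have P: "pochhammer (- real n) s \<noteq> 0"
    using assms by (auto simp: pochhammer_eq_0_iff)
  have sn: "real s - real n \<noteq> 0" using assms by simp
  have q1: "real q - 1 \<noteq> 0" using assms by simp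
  have fs: "fact s \<noteq> (0::real)" by simp
  have s1: "real s + 1 \<noteq> 0" by linarith
  define p where "p = real q / (real q - 1)"
  have pq: "p * (real q - 1) = real q" using q1 by (simp add: p_def)
  have e: "cc q n j (Suc s) = cc q n j s * ((real s - real j) * p / ((real s - real n) * (real s + 1)))"
    unfolding cc_def p_def[symmetric] using P sn s1 fs
    by (simp add: pochhammer_Suc fact_Suc power_Suc field_simps)
  have "cc q n j (Suc s) * (real q - 1) * (real s + 1) * (real s - real n)
     = cc q n j s * (real s - real j) * (p * (real q - 1))"
  proof -
    have Y: "(real s - real n) * (real s + 1) \<noteq> 0" using sn s1 by simp
    have e2: "cc q n j (Suc s) * ((real s - real n) * (real s + 1)) = cc q n j s * (real s - real j) * p"
      unfolding e using Y by simp
    have "cc q n j (Suc s) * (real q - 1) * (real s + 1) * (real s - real n)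
       = (cc q n j (Suc s) * ((real s - real n) * (real s + 1))) * (real q - 1)" by (simp only: mult_ac)
    thus ?thesis unfolding e2 by (simp only: mult_ac)
  qed
  also have "\<dots> = - cc q n j s * real q * (real j - real s)" unfolding pq by (simp add: algebra_simps)
  finally show ?thesis .
qed

lemma T0: "x*(real q-2)*AA 0 x + x*AA 0 (x-1) + (real n-x)*(real q-1)*AA 0 (x+1)
    - ((real q-1)*real n - real j*real q)*AA 0 x = real j * real q"
  by (simp add: AA_def algebra_simps)

lemma TS: "x*(real q-2)*AA (Suc s) x + x*AA (Suc s) (x-1) + (real n-x)*(real q-1)*AA (Suc s) (x+1)
    - ((real q-1)*real n - real j*real q)*AA (Suc s) x
   = real q*(real j - (real s+1)) * AA (Suc s) x + (real q-1)*(real s+1)*(real s-real n)*AA s x"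
proof -
  have a: "x * AA (Suc s) (x-1) = - AA (Suc (Suc s)) x" by (rule F1)
  have b: "x * AA (Suc s) x = real (Suc s) * AA (Suc s) x - AA (Suc (Suc s)) x" by (rule F2)
  have c: "x * AA s x = real s * AA s x - AA (Suc s) x" by (rule F2)
  have d: "AA (Suc s) (x+1) = AA (Suc s) x - real (Suc s) * AA s x" by (rule F3)
  show ?thesis using a b c d by (simp only: of_nat_Suc) algebra
qed


lemma KK_rec:
  assumes "j \<le> n" "q \<ge> 2"
  shows "x*(real q-2)*KK q n j x + x*KK q n j (x-1) + (real n-x)*(real q-1)*KK q n j (x+1)
       = ((real q-1)*real n - real j*real q) * KK q n j x"
proof -
  define T where "T r = x*(real q-2)*AA r x + x*AA r (x-1) + (real n-x)*(real q-1)*AA r (x+1)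
    - ((real q-1)*real n - real j*real q)*AA r x" for r
  define c where "c = cc q n j"
  define D where "D r = c r * real q * (real j - real r) * AA r x" for r
  have diff: "x*(real q-2)*KK q n j x + x*KK q n j (x-1) + (real n-x)*(real q-1)*KK q n j (x+1)
       - ((real q-1)*real n - real j*real q) * KK q n j x = (\<Sum>r\<le>j. c r * T r)"
    unfolding KK_def T_def c_def atLeast0AtMost
    by (simp add: sum_distrib_left sum.distrib sum_subtractf algebra_simps)
  have "(\<Sum>r\<le>j. c r * T r) = 0"
  proof (cases j)
    case 0 thus ?thesis unfolding T_def by (simp add: AA_def algebra_simps)
  next
    case (Suc m)
    have ES: "c (Suc s) * T (Suc s) = D (Suc s) - D s" if "s \<le> m" for s
    proof -
      have "s < j" using that Suc by simp
      have r: "c (Suc s) * (real q - 1) * (real s + 1) * (real s - real n)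
         = - c s * real q * (real j - real s)" unfolding c_def by (rule cc_rel) (use \<open>s<j\<close> assms in auto)
      have "c (Suc s) * T (Suc s) = c (Suc s) * (real q*(real j - (real s+1)) * AA (Suc s) x)
          + (c (Suc s) * (real q - 1) * (real s + 1) * (real s - real n)) * AA s x"
        unfolding T_def TS by (simp add: algebra_simps)
      also have "\<dots> = D (Suc s) - D s" unfolding r D_def by (simp add: algebra_simps)
      finally show ?thesis .
    qed
    have "(\<Sum>r\<le>j. c r * T r) = c 0 * T 0 + (\<Sum>s\<le>m. c (Suc s) * T (Suc s))"
      unfolding Suc by (rule sum.atMost_Suc_shift)
    also have "(\<Sum>s\<le>m. c (Suc s) * T (Suc s)) = (\<Sum>s\<le>m. D (Suc s) - D s)"
      using ES by (rule sum.cong[OF refl]) (simp)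
    also have "\<dots> = D (Suc m) - D 0" by (induction m) (simp_all add: algebra_simps)
    also have "D (Suc m) = 0" unfolding D_def Suc by simp
    also have "c 0 * T 0 = D 0" unfolding c_def T_def T0 D_def by (simp add: cc0 AA_def)
    finally show ?thesis by simp
  qed
  with diff show ?thesis by simp
qed


lemma upd_in: "x \<in> Xn q n \<Longrightarrow> i < n \<Longrightarrow> v < q \<Longrightarrow> x(i:=v) \<in> Xn q n"
  by (auto simp: Xn_def)

lemma hdist_upd: "i < n \<Longrightarrow> v \<noteq> x i \<Longrightarrow> hdist n x (x(i:=v)) = 1"
proof -
  assume a: "i < n" "v \<noteq> x i"
  have "{i'\<in>{0..<n}. x i' \<noteq> (x(i:=v)) i'} = {i}" using a by auto
  thus ?thesis by (simp add: hdist_def)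
qed

lemma hdist1_E:
  assumes "x \<in> Xn q n" "y \<in> Xn q n" "hdist n x y = 1"
  shows "\<exists>i<n. y i \<noteq> x i \<and> y i < q \<and> y = x(i := y i)"
proof -
  from assms(3) obtain i where D: "{i'\<in>{0..<n}. x i' \<noteq> y i'} = {i}"
    unfolding hdist_def by (rule card_1_singletonE)
  hence "i \<in> {i'\<in>{0..<n}. x i' \<noteq> y i'}" by simp
  hence i: "i < n" "x i \<noteq> y i" by auto
  have "y = x(i := y i)"
  proof
    fix t show "y t = (x(i := y i)) t"
    proof (cases "t = i")
      case False
      show ?thesis
      proof (cases "t < n")
        case True
        have "t \<notin> {i'\<in>{0..<n}. x i' \<noteq> y i'}" using D False by simp
        with True False show ?thesis by simp
      next
        case False' : False
        have "x t = 0" "y t = 0" using assms(1,2) False' unfolding Xn_def by auto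
        with False show ?thesis by simp
      qed
    qed simp
  qed
  moreover have "y i < q" using assms(2) i by (auto simp: Xn_def)
  ultimately show ?thesis using i by auto
qed

lemma neighbor_sum:
  assumes x: "x \<in> Xn q n"
  shows "(\<Sum>y\<in>Xn q n. trans_p q n x y * g y)
       = 1 / (real n * (real q - 1)) * (\<Sum>i<n. \<Sum>v\<in>{..<q}-{x i}. g (x(i:=v)))"
proof -
  define c where "c = 1 / (real n * (real q - 1))"
  define N where "N = {y\<in>Xn q n. hdist n x y = 1}"
  define h where "h = (\<lambda>(i::nat,v::nat). x(i:=v))"
  define A where "A = Sigma {..<n} (\<lambda>i. {..<q}-{x i})"
  have "(\<Sum>y\<in>Xn q n. trans_p q n x y * g y) = (\<Sum>y\<in>Xn q n. if hdist n x y = 1 then c * g y else 0)"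
    by (rule sum.cong) (auto simp: trans_p_def c_def)
  also have "\<dots> = (\<Sum>y\<in>N. c * g y)"
    unfolding N_def by (rule sum.inter_filter[symmetric, OF finite_Xn])
  also have "N = h ` A"
  proof
    show "N \<subseteq> h ` A"
    proof
      fix y assume "y \<in> N"
      then obtain i where "i<n" "y i \<noteq> x i" "y i < q" "y = x(i := y i)"
        using hdist1_E[OF x] unfolding N_def by blast
      thus "y \<in> h ` A" unfolding h_def A_def by (auto intro!: image_eqI[where x="(i, y i)"])
    qed
    show "h ` A \<subseteq> N"
      using x by (auto simp: h_def A_def N_def upd_in hdist_upd)
  qed
  also have "inj_on h A"
  proof (rule inj_onI)
    fix a b assume "a \<in> A" "b \<in> A" "h a = h b"
    then obtain i v i' v' where ab: "a = (i,v)" "b = (i',v')" "v \<noteq> x i" "v' \<noteq> x i'"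
      "x(i:=v) = x(i':=v')" unfolding A_def h_def by auto
    have e: "(x(i:=v)) t = (x(i':=v')) t" for t using ab(5) by simp
    have "i = i'"
    proof (rule ccontr)
      assume "i \<noteq> i'"
      with e[of i] ab(3) show False by simp
    qed
    with e[of i] ab show "a = b" by simp
  qed
  hence "(\<Sum>y\<in>h ` A. c * g y) = (\<Sum>a\<in>A. c * g (h a))" by (simp add: sum.reindex)
  also have "\<dots> = c * (\<Sum>i<n. \<Sum>v\<in>{..<q}-{x i}. g (x(i:=v)))"
    unfolding A_def h_def sum_distrib_left[symmetric]
    by (subst sum.Sigma) (auto simp: prod.case_distrib)
  finally show ?thesis unfolding c_def .
qed




lemma hdist_x0: "hdist n x0 y = card {i\<in>{0..<n}. y i \<noteq> 0}"
proof -
  have "{i\<in>{0..<n}. x0 i \<noteq> y i} = {i\<in>{0..<n}. y i \<noteq> 0}" by (auto simp: x0_def)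
  thus ?thesis unfolding hdist_def by simp
qed

lemma card_split: "finite A \<Longrightarrow> card A = card (A - {a}) + (if a \<in> A then 1 else 0)"
proof (cases "a \<in> A")
  case True
  assume "finite A"
  from card.remove[OF this True] True show ?thesis by simp
qed simp

lemma hdist_le: "hdist n x y \<le> n"
proof -
  have "hdist n x y \<le> card {0..<n}" unfolding hdist_def by (rule card_mono) auto
  thus ?thesis by simp
qed

lemma hdist_x0_upd:
  assumes "i < n"
  shows "real (hdist n x0 (x(i:=v))) = real (hdist n x0 x) - (if x i \<noteq> 0 then 1 else 0)
           + (if v \<noteq> 0 then 1 else 0)"
proof -
  define S where "S = {t\<in>{0..<n}. x t \<noteq> 0}"
  define S' where "S' = {t\<in>{0..<n}. (x(i:=v)) t \<noteq> 0}"
  have eq: "S' - {i} = S - {i}" unfolding S_def S'_def by auto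
  have c1: "card S = card (S - {i}) + (if i \<in> S then 1 else 0)" by (rule card_split) (simp add: S_def)
  have c2: "card S' = card (S' - {i}) + (if i \<in> S' then 1 else 0)" by (rule card_split) (simp add: S'_def)
  have i1: "(i \<in> S) = (x i \<noteq> 0)" using assms by (simp add: S_def)
  have i2: "(i \<in> S') = (v \<noteq> 0)" using assms by (simp add: S'_def)
  have "real (card S') = real (card S) - (if x i \<noteq> 0 then 1 else 0) + (if v \<noteq> 0 then 1 else 0)"
    using c1 c2 unfolding eq i1 i2 by (simp split: if_splits)
  thus ?thesis unfolding hdist_x0 S_def S'_def .
qed

lemma eigen:
  assumes x: "x \<in> Xn q n" and jn: "j \<le> n" and n1: "n \<ge> 1" and q2: "q \<ge> 2"
  shows "(\<Sum>y\<in>Xn q n. trans_p q n x y * phi q n j y)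
       = (1 - real j * real q / (real n * (real q - 1))) * phi q n j x"
proof -
  define K where "K = KK q n j"
  define l where "l = real (hdist n x0 x)"
  define \<alpha> where "\<alpha> = K (l-1) + (real q - 2) * K l"
  define \<beta> where "\<beta> = (real q - 1) * K (l+1)"
  define S where "S = {i\<in>{0..<n}. x i \<noteq> 0}"
  have inner: "(\<Sum>v\<in>{..<q}-{x i}. phi q n j (x(i:=v))) = (if x i \<noteq> 0 then \<alpha> else \<beta>)"
    if i: "i < n" for i
  proof (cases "x i = 0")
    case True
    have "(\<Sum>v\<in>{..<q}-{x i}. phi q n j (x(i:=v))) = (\<Sum>v\<in>{..<q}-{0}. K (l+1))"
      unfolding True
      by (rule sum.cong) (auto simp: phi_KK K_def l_def hdist_x0_upd[OF i] True)
    also have "\<dots> = real (q - 1) * K (l+1)" using q2 by simp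
    also have "\<dots> = \<beta>" using q2 by (simp add: \<beta>_def of_nat_diff)
    finally show ?thesis using True by simp
  next
    case False
    have wq: "x i < q" using x i by (simp add: Xn_def)
    have split: "{..<q}-{x i} = insert 0 ({..<q}-{0, x i})" using False q2 by auto
    have "(\<Sum>v\<in>{..<q}-{x i}. phi q n j (x(i:=v))) = K (l-1) + (\<Sum>v\<in>{..<q}-{0, x i}. phi q n j (x(i:=v)))"
      unfolding split by (subst sum.insert) (auto simp: phi_KK K_def l_def hdist_x0_upd[OF i] False)
    also have "(\<Sum>v\<in>{..<q}-{0, x i}. phi q n j (x(i:=v))) = (\<Sum>v\<in>{..<q}-{0, x i}. K l)"
      by (rule sum.cong) (auto simp: phi_KK K_def l_def hdist_x0_upd[OF i] False)
    also have "\<dots> = real (card ({..<q}-{0, x i})) * K l" by simp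
    also have "real (card ({..<q}-{0, x i})) = real q - 2"
      using False wq q2 by (subst card_Diff_subset) (auto simp: of_nat_diff)
    finally have h: "(\<Sum>v\<in>{..<q}-{x i}. phi q n j (x(i:=v))) = \<alpha>" unfolding \<alpha>_def .
    show ?thesis using False h by simp
  qed
  have "(\<Sum>i<n. \<Sum>v\<in>{..<q}-{x i}. phi q n j (x(i:=v))) = (\<Sum>i<n. \<beta> + (if x i \<noteq> 0 then \<alpha> - \<beta> else 0))"
    by (rule sum.cong) (auto simp: inner)
  also have "\<dots> = real n * \<beta> + (\<Sum>i\<in>{i\<in>{..<n}. x i \<noteq> 0}. \<alpha> - \<beta>)"
  proof -
    have "(\<Sum>i<n. if x i \<noteq> 0 then \<alpha> - \<beta> else 0) = (\<Sum>i\<in>{i\<in>{..<n}. x i \<noteq> 0}. \<alpha> - \<beta>)"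
      by (rule sum.inter_filter[symmetric]) simp
    thus ?thesis by (simp only: sum.distrib) simp
  qed
  also have "{i\<in>{..<n}. x i \<noteq> 0} = S" unfolding S_def by auto
  also have "(\<Sum>i\<in>S. \<alpha> - \<beta>) = l * (\<alpha> - \<beta>)" by (simp add: l_def hdist_x0 S_def)
  also have "real n * \<beta> + l * (\<alpha> - \<beta>)
     = l*(real q-2)*K l + l*K (l-1) + (real n-l)*(real q-1)*K (l+1)"
    by (simp add: \<alpha>_def \<beta>_def algebra_simps)
  also have "\<dots> = ((real q-1)*real n - real j*real q) * K l"
    unfolding K_def by (rule KK_rec[OF jn q2])
  finally have s: "(\<Sum>i<n. \<Sum>v\<in>{..<q}-{x i}. phi q n j (x(i:=v))) = ((real q-1)*real n - real j*real q) * K l" .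
  have nz: "real n * (real q - 1) \<noteq> 0" using n1 q2 by simp
  have "1 / (real n * (real q - 1)) * (((real q-1)*real n - real j*real q) * K l)
      = (1 - real j * real q / (real n * (real q - 1))) * K l"
    using nz by (simp add: field_simps)
  thus ?thesis unfolding neighbor_sum[OF x] s by (simp add: phi_KK K_def l_def)
qed

lemma pk_eigen:
  assumes ev: "\<And>y. y \<in> Xn q n \<Longrightarrow> (\<Sum>x\<in>Xn q n. trans_p q n y x * f x) = lam * f y"
    and z: "z \<in> Xn q n"
  shows "(\<Sum>x\<in>Xn q n. trans_pk q n k z x * f x) = lam ^ k * f z"
proof (induction k)
  case 0
  have "(\<Sum>x\<in>Xn q n. trans_pk q n 0 z x * f x) = (\<Sum>x\<in>Xn q n. if z = x then f x else 0)"
    by (rule sum.cong) auto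
  also have "\<dots> = f z" using z finite_Xn by simp
  finally show ?case by simp
next
  case (Suc k)
  have "(\<Sum>x\<in>Xn q n. trans_pk q n (Suc k) z x * f x)
      = (\<Sum>x\<in>Xn q n. \<Sum>y\<in>Xn q n. trans_pk q n k z y * (trans_p q n y x * f x))"
    by (simp add: sum_distrib_right mult.assoc)
  also have "\<dots> = (\<Sum>y\<in>Xn q n. \<Sum>x\<in>Xn q n. trans_pk q n k z y * (trans_p q n y x * f x))"
    by (rule sum.swap)
  also have "\<dots> = (\<Sum>y\<in>Xn q n. trans_pk q n k z y * (lam * f y))"
    by (rule sum.cong) (auto simp: sum_distrib_left[symmetric] ev)
  also have "\<dots> = lam * (\<Sum>y\<in>Xn q n. trans_pk q n k z y * f y)"
    by (simp add: sum_distrib_left mult_ac)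
  finally show ?case using Suc by simp
qed

lemma phi_x0: "phi q n j x0 = 1"
proof -
  have "hdist n x0 x0 = 0" by (simp add: hdist_def)
  hence "phi q n j x0 = (\<Sum>r\<in>{0..j}. if r = 0 then 1 else 0)"
    unfolding phi_def Let_def by (intro sum.cong) (auto simp: pochhammer_0_left)
  thus ?thesis by simp
qed

lemma part1:
  assumes "n \<ge> 1" "q \<ge> 2" "j \<le> n"
  shows "Exp q n (nu_conv q n k) (phi q n j) = (1 - real j * real q / (real n * (real q - 1))) ^ k"
proof -
  have "Exp q n (nu_conv q n k) (phi q n j) = (\<Sum>x\<in>Xn q n. trans_pk q n k x0 x * phi q n j x)"
    unfolding Exp_def nu_conv_def by (simp add: mult.commute)
  also have "\<dots> = (1 - real j * real q / (real n * (real q - 1))) ^ k * phi q n j x0"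
    by (rule pk_eigen[OF eigen x0_in]) (use assms in auto)
  finally show ?thesis by (simp add: phi_x0)
qed

lemma phi0: "phi q n 0 y = 1" by (simp add: phi_def)

lemma phi1: "n \<ge> 1 \<Longrightarrow> phi q n 1 y = 1 - real (hdist n x0 y) * (real q / (real q - 1)) / real n"
  by (simp add: phi_def Let_def)

lemma sum2: "N \<noteq> 0 \<Longrightarrow> N \<noteq> 1 \<Longrightarrow> (\<Sum>r=0..2. pochhammer (- 2) r * pochhammer (- L) r / (pochhammer (- N) r * fact r) * (P::real) ^ r)
   = 1 - 2 * L * P / N + P^2 * L * (L - 1) / (N * (N - 1))"
  by (simp add: eval_nat_numeral pochhammer_Suc field_simps)

lemma phi2: "n \<ge> 2 \<Longrightarrow> phi q n 2 y = 1 - 2 * real (hdist n x0 y) * (real q / (real q - 1)) / real n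
   + (real q / (real q - 1))^2 * real (hdist n x0 y) * (real (hdist n x0 y) - 1) / (real n * (real n - 1))"
proof -
  assume n: "n \<ge> 2"
  have "phi q n 2 y = (\<Sum>r=0..2. pochhammer (- 2) r * pochhammer (- real (hdist n x0 y)) r
      / (pochhammer (- real n) r * fact r) * (real q / (real q - 1)) ^ r)"
    by (simp add: phi_def Let_def)
  also have "\<dots> = 1 - 2 * real (hdist n x0 y) * (real q / (real q - 1)) / real n
   + (real q / (real q - 1))^2 * real (hdist n x0 y) * (real (hdist n x0 y) - 1) / (real n * (real n - 1))"
    by (rule sum2) (use n in auto)
  finally show ?thesis .
qed


theorem lemma4p3:
  fixes n q k :: nat
  assumes "n \<ge> 1" and "q \<ge> 2"
  shows "(\<forall>j\<in>{0..n}. Exp q n (nu_conv q n k) (phi q n j)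
            = (1 - real j * real q / (real n * (real q - 1))) ^ k)
       \<and> ((real n - 2) * (real q - 1) \<ge> 2 \<longrightarrow> Var q n (nu_conv q n k) (phi q n 1) \<le> 1 / real n)"
proof (intro conjI ballI impI)
  fix j assume "j \<in> {0..n}"
  thus "Exp q n (nu_conv q n k) (phi q n j) = (1 - real j * real q / (real n * (real q - 1))) ^ k"
    using part1 assms by auto
next
  assume h: "(real n - 2) * (real q - 1) \<ge> 2"
  have q1: "real q - 1 \<ge> 1" using assms by simp
  have n3: "n \<ge> 3"
  proof (rule ccontr)
    assume "\<not> n \<ge> 3"
    hence "real n - 2 \<le> 0" by simp
    hence "(real n - 2) * (real q - 1) \<le> 0" using q1 by (simp add: mult_nonpos_nonneg)
    with h show False by simp
  qed
  have nn: "real n \<noteq> 0" using n3 by simp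
  define p where "p = real q / (real q - 1)"
  define \<mu> where "\<mu> = nu_conv q n k"
  define l1 where "l1 = 1 - real 1 * real q / (real n * (real q - 1))"
  define l2 where "l2 = 1 - real 2 * real q / (real n * (real q - 1))"
  define a where "a = l1 ^ k"
  define b where "b = l2 ^ k"
  have nq: "real n * (real q - 1) > 0" using assms q1 by simp
  have E0: "Exp q n \<mu> (phi q n 0) = 1" using part1[of n q 0 k] assms by (simp add: \<mu>_def)
  have E1: "Exp q n \<mu> (phi q n 1) = a" using part1[of n q 1 k] assms by (simp add: \<mu>_def a_def l1_def)
  have E2: "Exp q n \<mu> (phi q n 2) = b" using part1[of n q 2 k] assms n3 by (simp add: \<mu>_def b_def l2_def)
  have pt: "(phi q n 1 y)^2 = (1/real n + (p-2)/real n) * phi q n 0 y - (p-2)/real n * phi q n 1 y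
      + (real n - 1)/real n * phi q n 2 y" for y
  proof -
    have n2: "n \<ge> 2" using n3 by simp
    have "real n \<noteq> 0" "real n - 1 \<noteq> 0" using n3 by auto
    thus ?thesis unfolding phi0 phi1[OF \<open>n\<ge>1\<close>] phi2[OF n2] p_def[symmetric]
      by (simp add: field_simps power2_eq_square)
  qed
  have "Exp q n \<mu> (\<lambda>y. (phi q n 1 y)^2)
    = (1/real n + (p-2)/real n) * Exp q n \<mu> (phi q n 0) - (p-2)/real n * Exp q n \<mu> (phi q n 1)
      + (real n - 1)/real n * Exp q n \<mu> (phi q n 2)"
    unfolding Exp_def pt
    by (simp add: sum.distrib sum_subtractf sum_distrib_left algebra_simps)
  note ex = this[unfolded E0 E1 E2]
  have V: "Var q n \<mu> (phi q n 1) = 1/real n + (p-2)/real n * (1 - a) + (real n - 1)/real n * b - a^2"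
    unfolding Var_def ex E1 using nn by (simp add: field_simps)
  have p2: "p \<le> 2" unfolding p_def using q1 by (simp add: divide_le_eq)
  have l2nn: "l2 \<ge> 0"
  proof -
    have "2 * real q \<le> real n * (real q - 1)" using h by (simp add: algebra_simps)
    thus ?thesis unfolding l2_def using nq by (simp add: divide_le_eq)
  qed
  define t where "t = real q / (real n * (real q - 1))"
  have l1t: "l1 = 1 - t" unfolding l1_def t_def by simp
  have l2t: "l2 = 1 - 2 * t" unfolding l2_def t_def by simp
  have t0: "t \<ge> 0" unfolding t_def using nq by simp
  have l1le: "l1 \<le> 1" using l1t t0 by simp
  have l12: "l2 \<le> l1^2"
  proof -
    have "l1^2 - l2 = t^2" unfolding l1t l2t by (simp add: power2_eq_square algebra_simps)
    thus ?thesis using zero_le_power2[of t] by linarith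
  qed
  have l1nn: "l1 \<ge> 0" using l2nn l1t l2t t0 by linarith
  have a01: "0 \<le> a" "a \<le> 1" unfolding a_def using l1nn l1le by (auto simp: power_le_one)
  have b0: "0 \<le> b" unfolding b_def using l2nn by simp
  have ba1: "l2^k \<le> (l1^2)^k" by (rule power_mono[OF l12 l2nn])
  have ba2: "(l1^2)^k = (l1^k)^2" by (metis power_mult mult.commute)
  have ba: "b \<le> a^2" unfolding a_def b_def using ba1 ba2 by simp
  have t1: "(p-2)/real n * (1 - a) \<le> 0"
    using p2 a01 n3 by (simp add: mult_nonpos_nonneg divide_nonpos_nonneg)
  have t2: "(real n - 1)/real n * b \<le> b"
  proof -
    have "(real n - 1)/real n \<le> 1" using n3 by simp
    thus ?thesis using b0 mult_left_le_one_le[of b "(real n - 1)/real n"] n3 by simp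
  qed
  show "Var q n (nu_conv q n k) (phi q n 1) \<le> 1 / real n"
    using V t1 t2 ba unfolding \<mu>_def by linarith
qed


end
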